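(* Let $a=1/\sqrt3$ and $b=\sqrt{2/3}$, and consider the eleven unit vectors in $\mathbb{R}^4$ given by the columns of $$\begin{pmatrix}1&0&0&0&0&a&a&a&a&a&a\\0&a&-a&a&a&b&-b&0&0&0&0\\0&a&a&-a&a&0&0&b&-b&0&0\\0&a&a&a&-a&0&0&0&0&b&-b\end{pmatrix}.$$ To each column $(r_0,r_1,r_2,r_3)$ associate the element of $\operatorname{PU}(2)$ represented by $r_0I+i(r_1X+r_2Y+r_3Z)$, and give the first element weight $1/16$ and each of the remaining ten weight $3/32$. This weighted set of $11$ elements is a weighted unitary $2$-design in $\operatorname{PU}(2)$.
   Context: $X,Y,Z$ are the Pauli matrices $X=\begin{pmatrix}0&1\\1&0\end{pmatrix}$, $Y=\begin{pmatrix}0&-i\\i&0\end{pmatrix}$, $Z=\begin{pmatrix}1&0\\0&-1\end{pmatrix}$. $\operatorname{PU}(2)=\operatorname{U}(2)/\operatorname{U}(1)$ with Haar probability measure $\mu$. A weighted unitary $2$-design is a finite $\mathscr{D}\subset\operatorname{PU}(d)$ with weights $w>0$, $\sum w=1$, and $\sum_{x}w(x)U(x)^{\otimes2}\otimes(U(x)^{\otimes2})^\dagger=\int d\mu(x)U(x)^{\otimes2}\otimes(U(x)^{\otimes2})^\dagger$, $U(x)$ a representative of $x$. *)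

theory Defs
  imports "HOL-Analysis.Analysis" "HOL-Probability.Probability"
begin

type_synonym cmat2 = "complex^2^2"

definition adjoint :: "complex^'n^'n \<Rightarrow> complex^'n^'n" where
  "adjoint A = (\<chi> i j. cnj (A $ j $ i))"

definition kron :: "complex^'n^'m \<Rightarrow> complex^'q^'p \<Rightarrow> complex^('n \<times> 'q)^('m \<times> 'p)" where
  "kron A B = (\<chi> r c. A $ fst r $ fst c * B $ snd r $ snd c)"

definition U2 :: "cmat2 set" where
  "U2 = {U. U ** adjoint U = mat 1}"

text \<open>U tensor U tensor (U tensor U)^dagger.  It is invariant under U \<mapsto> cU with |c|=1,
  hence well defined on PU(2).\<close>
definition twirl2 :: "cmat2 \<Rightarrow> complex^((2 \<times> 2) \<times> (2 \<times> 2))^((2 \<times> 2) \<times> (2 \<times> 2))" where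
  "twirl2 U = kron (kron U U) (adjoint (kron U U))"

text \<open>Integrals of functions on PU(2) against the Haar measure of PU(2) coincide with integrals of
  their lifts against the Haar measure of U(2).\<close>
definition haar_U2 :: "cmat2 measure \<Rightarrow> bool" where
  "haar_U2 M \<longleftrightarrow> prob_space M \<and> sets M = sets borel \<and> emeasure M U2 = 1 \<and>
     (\<forall>V\<in>U2. \<forall>A\<in>sets borel. emeasure M {U. V ** U \<in> A} = emeasure M A)"

definition same_in_PU :: "cmat2 \<Rightarrow> cmat2 \<Rightarrow> bool" where
  "same_in_PU U V \<longleftrightarrow> (\<exists>c::complex. U = (\<chi> i j. c * V $ i $ j))"

definition weighted_2design :: "'i set \<Rightarrow> ('i \<Rightarrow> cmat2) \<Rightarrow> ('i \<Rightarrow> real) \<Rightarrow> bool" where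
  "weighted_2design D U w \<longleftrightarrow>
     finite D \<and> (\<forall>x\<in>D. U x \<in> U2) \<and>
     (\<forall>x\<in>D. \<forall>y\<in>D. x \<noteq> y \<longrightarrow> \<not> same_in_PU (U x) (U y)) \<and>
     (\<forall>x\<in>D. w x > 0) \<and> sum w D = 1 \<and>
     (\<forall>M. haar_U2 M \<longrightarrow> (\<Sum>x\<in>D. w x *\<^sub>R twirl2 (U x)) = integral\<^sup>L M twirl2)"

definition pauliX :: cmat2 where "pauliX = vector [vector [0, 1], vector [1, 0]]"
definition pauliY :: cmat2 where "pauliY = vector [vector [0, -\<i>], vector [\<i>, 0]]"
definition pauliZ :: cmat2 where "pauliZ = vector [vector [1, 0], vector [0, -1]]"

definition quat_elem :: "real \<times> real \<times> real \<times> real \<Rightarrow> cmat2" where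
  "quat_elem r = (case r of (r0, r1, r2, r3) \<Rightarrow>
     (\<chi> i j. complex_of_real r0 * (mat 1 :: cmat2) $ i $ j +
        \<i> * (complex_of_real r1 * pauliX $ i $ j + complex_of_real r2 * pauliY $ i $ j
              + complex_of_real r3 * pauliZ $ i $ j)))"

definition ca :: real where "ca = 1 / sqrt 3"
definition cb :: real where "cb = sqrt (2 / 3)"

definition design_cols :: "(real \<times> real \<times> real \<times> real) list" where
  "design_cols = [(1, 0, 0, 0),
     (0, ca, ca, ca), (0, -ca, ca, ca), (0, ca, -ca, ca), (0, ca, ca, -ca),
     (ca, cb, 0, 0), (ca, -cb, 0, 0), (ca, 0, cb, 0), (ca, 0, -cb, 0),
     (ca, 0, 0, cb), (ca, 0, 0, -cb)]"

definition design_weights :: "real list" where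
  "design_weights = [1/16] @ replicate 10 (3/32)"

end

theory Submission
  imports Defs
begin

lemma qe: "quat_elem (r0,r1,r2,r3) = vector [vector [Complex r0 r3, Complex r2 r1], vector [Complex (-r2) r1, Complex r0 (-r3)]]"
  unfolding quat_elem_def pauliX_def pauliY_def pauliZ_def
  by (simp add: vec_eq_iff forall_2 mat_def complex_eq_iff)

lemma ca2: "ca * ca = 1/3" by (simp add: ca_def real_sqrt_mult[symmetric])
lemma cb2: "cb * cb = 2/3" by (simp add: cb_def real_sqrt_mult[symmetric])
lemma ca2': "ca * (ca * x) = x/3" using ca2 by (metis mult.assoc mult.commute times_divide_eq_right mult_1)
lemma cb2': "cb * (cb * x) = 2*x/3" using cb2 by (metis mult.assoc times_divide_eq_left)

definition Sent where "Sent a e b f g c h d = (\<Sum>k<11. complex_of_real (design_weights ! k) *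
   (quat_elem (design_cols ! k) $ a $ e * quat_elem (design_cols ! k) $ b $ f *
    cnj (quat_elem (design_cols ! k) $ g $ c) * cnj (quat_elem (design_cols ! k) $ h $ d)))"

lemma sum11: "(\<Sum>k<(11::nat). F k) = F 0 + F 1 + F 2 + F 3 + F 4 + F 5 + F 6 + F 7 + F 8 + F 9 + (F 10 :: complex)"
  by (simp add: numeral_eq_Suc lessThan_Suc add_ac)

definition dl :: "2 \<Rightarrow> 2 \<Rightarrow> complex" where "dl x y = (if x = y then 1 else 0)"

definition ent :: "cmat2 \<Rightarrow> 2 \<Rightarrow> 2 \<Rightarrow> 2 \<Rightarrow> 2 \<Rightarrow> 2 \<Rightarrow> 2 \<Rightarrow> 2 \<Rightarrow> 2 \<Rightarrow> complex" where
  "ent U a e b f g c h d = U$a$e * U$b$f * cnj (U$g$c) * cnj (U$h$d)"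

lemma cont_entry[continuous_intros]: "continuous_on S (\<lambda>U::cmat2. U $ i $ j)"
  by (intro continuous_intros)

lemma cont_ent: "continuous_on UNIV (\<lambda>U. ent U a e b f g c h d)"
  unfolding ent_def by (intro continuous_intros)

lemma cont_twirl2: "continuous_on UNIV twirl2"
  unfolding twirl2_def kron_def adjoint_def by (intro continuous_intros)

lemma cont_mult: "continuous_on UNIV (\<lambda>U::cmat2. V ** U)"
  unfolding matrix_matrix_mult_def by (intro continuous_intros)

lemma closed_U2: "closed U2"
proof -
  have "continuous_on UNIV (\<lambda>U::cmat2. U ** adjoint U)"
    unfolding matrix_matrix_mult_def adjoint_def by (intro continuous_intros)
  then show ?thesis unfolding U2_def by (rule closed_Collect_eq[OF _ continuous_on_const])
qed

lemma U2_rows: "U \<in> U2 \<Longrightarrow> (\<Sum>k\<in>UNIV. U$i$k * cnj (U$j$k)) = (if i = j then 1 else 0)"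
  unfolding U2_def by (auto simp: vec_eq_iff matrix_matrix_mult_def adjoint_def mat_def)

lemma U2_cols: "U \<in> U2 \<Longrightarrow> (\<Sum>k\<in>UNIV. U$k$i * cnj (U$k$j)) = (if i = j then 1 else 0)"
proof -
  assume "U \<in> U2"
  then have "adjoint U ** U = mat 1" unfolding U2_def using matrix_left_right_inverse by blast
  then have "(adjoint U ** U) $ j $ i = mat 1 $ j $ i" by simp
  then show ?thesis by (auto simp: matrix_matrix_mult_def adjoint_def mat_def mult.commute)
qed

lemma U2_entry_le: assumes "U \<in> U2" shows "norm (U$i$j) \<le> 1"
proof -
  have "(\<Sum>k\<in>UNIV. U$i$k * cnj (U$i$k)) = 1" using U2_rows[OF assms, of i i] by simp
  then have "complex_of_real (\<Sum>k\<in>UNIV. (cmod (U$i$k))^2) = 1"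
    by (simp only: of_real_sum complex_norm_square)
  then have s: "(\<Sum>k\<in>UNIV. (cmod (U$i$k))^2) = 1"
    using of_real_eq_1_iff by blast
  have "(cmod (U$i$j))^2 \<le> (\<Sum>k\<in>UNIV. (cmod (U$i$k))^2)"
    by (rule member_le_sum) auto
  then have "(cmod (U$i$j))^2 \<le> 1" using s by simp
  then show ?thesis by (simp add: power_le_one_iff abs_le_square_iff)
qed

lemma norm_vec_le_sum: "norm (x::'a::real_normed_vector^'n) \<le> (\<Sum>i\<in>UNIV. norm (x$i))"
  unfolding norm_vec_def by (rule L2_set_le_sum) auto

definition mom :: "cmat2 measure \<Rightarrow> 2 \<Rightarrow> 2 \<Rightarrow> 2 \<Rightarrow> 2 \<Rightarrow> 2 \<Rightarrow> 2 \<Rightarrow> 2 \<Rightarrow> 2 \<Rightarrow> complex" where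
  "mom M a e b f g c h d = integral\<^sup>L M (\<lambda>U. ent U a e b f g c h d)"

lemma ent_mult: "ent (V ** U) a e b f g c h d = (\<Sum>a'\<in>UNIV. \<Sum>b'\<in>UNIV. \<Sum>g'\<in>UNIV. \<Sum>h'\<in>UNIV.
   V$a$a' * V$b$b' * cnj (V$g$g') * cnj (V$h$h') * ent U a' e b' f g' c h' d)"
  unfolding ent_def matrix_matrix_mult_def by (simp add: sum_2 algebra_simps)

definition hs :: complex where "hs = of_real (1 / sqrt 2)"
definition Hm :: cmat2 where "Hm = vector [vector [hs, hs], vector [hs, - hs]]"

lemma neg_i_fix: "(x::complex) = - (\<i> * x) \<longleftrightarrow> x = 0"
proof
  assume a: "x = - (\<i> * x)"
  have "(1 + \<i>) * x = x + \<i> * x" by (simp add: distrib_right)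
  also have "\<dots> = 0" by (subst (1) a) simp
  finally have "(1 + \<i>) * x = 0" .
  moreover have "1 + \<i> \<noteq> 0" by (simp add: complex_eq_iff)
  ultimately show "x = 0" by simp
qed simp

definition Pm :: cmat2 where "Pm = vector [vector [\<i>, 0], vector [0, 1]]"


lemma Pm_U2: "Pm \<in> U2"
  unfolding U2_def Pm_def by (simp add: vec_eq_iff forall_2 matrix_matrix_mult_def adjoint_def mat_def sum_2)
lemma X_U2: "pauliX \<in> U2"
  unfolding U2_def pauliX_def by (simp add: vec_eq_iff forall_2 matrix_matrix_mult_def adjoint_def mat_def sum_2)
lemma hs_cnj[simp]: "cnj hs = hs" unfolding hs_def by simp
lemma hs_sq: "hs * hs = 1/2"
proof -
  have "hs * hs = complex_of_real (1 / sqrt 2 * (1 / sqrt 2))" unfolding hs_def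
    by (rule of_real_mult[symmetric])
  also have "\<dots> = complex_of_real (1/2)" by simp
  finally show ?thesis by simp
qed
lemma hs_sq': "hs * (hs * x) = x / 2" by (simp add: mult.assoc[symmetric] hs_sq)

lemma Hm_U2: "Hm \<in> U2"
  unfolding U2_def Hm_def by (simp add: vec_eq_iff forall_2 matrix_matrix_mult_def adjoint_def mat_def sum_2 hs_sq)

lemma lin1: "(x::complex) = x / 2 + (y / 2 + z / 2) \<Longrightarrow> x = y + z" by algebra
lemma lin2: "(p::complex) = q + r \<Longrightarrow> 2*p + 2*q = A \<Longrightarrow> 2 * p + 2 * r = B \<Longrightarrow> p = (A + B)/6" by algebra
lemma lin3: "(p::complex) = q + r \<Longrightarrow> 2*p + 2*q = A \<Longrightarrow> 2 * p + 2 * r = B \<Longrightarrow> q = A/3 - B/6" by algebra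
lemma lin4: "(p::complex) = q + r \<Longrightarrow> 2*p + 2*q = A \<Longrightarrow> 2 * p + 2 * r = B \<Longrightarrow> r = B/3 - A/6" by algebra

lemma dlc: "dl 1 1 = 1" "dl 2 2 = 1" "dl 1 2 = 0" "dl 2 1 = 0" by (simp_all add: dl_def)

definition Tf where "Tf a e b f g c h d = (dl e c * dl f d / 3 - dl e d * dl f c / 6) * dl a g * dl b h + (dl e d * dl f c / 3 - dl e c * dl f d / 6) * dl a h * dl b g"

context fixes M assumes haar: "haar_U2 M"
begin

interpretation prob_space M using haar unfolding haar_U2_def by auto

lemma setsM: "sets M = sets borel" using haar unfolding haar_U2_def by auto
lemma spaceM: "space M = UNIV" using sets_eq_imp_space_eq[OF setsM] by simp

lemma meas_cont: "continuous_on UNIV F \<Longrightarrow> F \<in> borel_measurable M"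
  using borel_measurable_continuous_onI measurable_cong_sets[OF setsM refl] by blast

lemma AE_U2: "AE U in M. U \<in> U2"
proof (rule AE_prob_1)
  have "U2 \<in> sets M" using setsM closed_U2 by simp
  then show "prob U2 = 1" using haar unfolding haar_U2_def by (simp add: measure_def)
qed

lemma int_ent: "integrable M (\<lambda>U. ent U a e b f g c h d)"
proof (rule integrable_const_bound[where B=1])
  show "AE U in M. norm (ent U a e b f g c h d) \<le> 1"
    using AE_U2
  proof eventually_elim
    case (elim U)
    then show ?case unfolding ent_def norm_mult complex_mod_cnj
      using U2_entry_le[OF elim] by (simp add: mult_le_one)
  qed
  show "(\<lambda>U. ent U a e b f g c h d) \<in> borel_measurable M" by (rule meas_cont[OF cont_ent])
qed

lemma int_twirl2: "integrable M twirl2"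
proof (rule integrable_const_bound[where B="of_nat (CARD((2\<times>2)\<times>(2\<times>2)) * CARD((2\<times>2)\<times>(2\<times>2)))"])
  show "AE U in M. norm (twirl2 U) \<le> of_nat (CARD((2\<times>2)\<times>(2\<times>2)) * CARD((2\<times>2)\<times>(2\<times>2)))"
    using AE_U2
  proof eventually_elim
    case (elim U)
    have e: "norm (twirl2 U $ r $ c) \<le> 1" for r c
    proof -
      have "twirl2 U $ r $ c = U $ fst (fst r) $ fst (fst c) * U $ snd (fst r) $ snd (fst c) *
         (cnj (U $ fst (snd c) $ fst (snd r)) * cnj (U $ snd (snd c) $ snd (snd r)))"
        unfolding twirl2_def kron_def adjoint_def by simp
      then show ?thesis using U2_entry_le[OF elim]
        by (simp only: norm_mult complex_mod_cnj) (intro mult_le_one; simp)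
    qed
    have "norm (twirl2 U) \<le> (\<Sum>r\<in>UNIV. norm (twirl2 U $ r))" by (rule norm_vec_le_sum)
    also have "\<dots> \<le> (\<Sum>r\<in>UNIV. \<Sum>c\<in>UNIV. norm (twirl2 U $ r $ c))"
      by (intro sum_mono norm_vec_le_sum)
    also have "\<dots> \<le> (\<Sum>r\<in>(UNIV::((2\<times>2)\<times>(2\<times>2)) set). \<Sum>c\<in>(UNIV::((2\<times>2)\<times>(2\<times>2)) set). 1)"
      by (intro sum_mono e)
    also have "\<dots> = of_nat (CARD((2\<times>2)\<times>(2\<times>2)) * CARD((2\<times>2)\<times>(2\<times>2)))"
      by (simp only: sum_constant) simp
    finally show ?case .
  qed
  show "twirl2 \<in> borel_measurable M" by (rule meas_cont[OF cont_twirl2])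
qed

lemma invariance:
  assumes V: "V \<in> U2" and F: "continuous_on UNIV F"
  shows "integral\<^sup>L M (\<lambda>U. F (V ** U)) = integral\<^sup>L M (F :: cmat2 \<Rightarrow> complex)"
proof -
  have g: "(\<lambda>U. V ** U) \<in> measurable M M"
    using borel_measurable_continuous_onI[OF cont_mult[of V]] measurable_cong_sets[OF setsM setsM] by blast
  have "distr M M (\<lambda>U. V ** U) = M"
  proof (rule measure_eqI)
    show "sets (distr M M (\<lambda>U. V ** U)) = sets M" by simp
    fix A assume "A \<in> sets (distr M M (\<lambda>U. V ** U))"
    then have A: "A \<in> sets borel" using setsM by simp
    have "emeasure (distr M M (\<lambda>U. V ** U)) A = emeasure M ((\<lambda>U. V ** U) -` A \<inter> space M)"
      using A setsM g by (simp add: emeasure_distr)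
    also have "\<dots> = emeasure M {U. V ** U \<in> A}" by (simp add: spaceM vimage_def)
    also have "\<dots> = emeasure M A" using haar V A unfolding haar_U2_def by blast
    finally show "emeasure (distr M M (\<lambda>U. V ** U)) A = emeasure M A" .
  qed
  then have "integral\<^sup>L M F = integral\<^sup>L (distr M M (\<lambda>U. V ** U)) F" by simp
  also have "\<dots> = integral\<^sup>L M (\<lambda>U. F (V ** U))"
    by (rule integral_distr[OF g meas_cont[OF F]])
  finally show ?thesis by simp
qed


lemma mom_inv: assumes V: "V \<in> U2"
  shows "mom M a e b f g c h d = (\<Sum>a'\<in>UNIV. \<Sum>b'\<in>UNIV. \<Sum>g'\<in>UNIV. \<Sum>h'\<in>UNIV.
   V$a$a' * V$b$b' * cnj (V$g$g') * cnj (V$h$h') * mom M a' e b' f g' c h' d)"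
proof -
  have "mom M a e b f g c h d = integral\<^sup>L M (\<lambda>U. ent (V ** U) a e b f g c h d)"
    unfolding mom_def using invariance[OF V cont_ent] by simp
  also have "\<dots> = integral\<^sup>L M (\<lambda>U. \<Sum>a'\<in>UNIV. \<Sum>b'\<in>UNIV. \<Sum>g'\<in>UNIV. \<Sum>h'\<in>UNIV.
   V$a$a' * V$b$b' * cnj (V$g$g') * cnj (V$h$h') * ent U a' e b' f g' c h' d)"
    by (simp only: ent_mult)
  also have "\<dots> = (\<Sum>a'\<in>UNIV. \<Sum>b'\<in>UNIV. \<Sum>g'\<in>UNIV. \<Sum>h'\<in>UNIV.
   V$a$a' * V$b$b' * cnj (V$g$g') * cnj (V$h$h') * mom M a' e b' f g' c h' d)"
    unfolding mom_def by (simp add: integral_sum int_ent)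
  finally show ?thesis .
qed


lemma contr1: "(\<Sum>a\<in>UNIV. \<Sum>b\<in>UNIV. mom M a e b f a c b d) = dl e c * dl f d"
proof -
  have "(\<Sum>a\<in>UNIV. \<Sum>b\<in>UNIV. mom M a e b f a c b d) = integral\<^sup>L M (\<lambda>U. \<Sum>a\<in>UNIV. \<Sum>b\<in>UNIV. ent U a e b f a c b d)"
    unfolding mom_def by (simp add: integral_sum int_ent)
  also have "\<dots> = integral\<^sup>L M (\<lambda>U. dl e c * dl f d)"
  proof (rule integral_cong_AE)
    show "(\<lambda>U. \<Sum>a\<in>UNIV. \<Sum>b\<in>UNIV. ent U a e b f a c b d) \<in> borel_measurable M"
      by (rule meas_cont) (intro continuous_on_sum cont_ent)
    show "(\<lambda>U. dl e c * dl f d) \<in> borel_measurable M" by simp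
    show "AE U in M. (\<Sum>a\<in>UNIV. \<Sum>b\<in>UNIV. ent U a e b f a c b d) = dl e c * dl f d"
      using AE_U2
    proof eventually_elim
      case (elim U)
      have c1: "U$1$e * cnj(U$1$c) + U$2$e * cnj(U$2$c) = dl e c"
        using U2_cols[OF elim, of e c] by (simp add: sum_2 dl_def)
      have c2: "U$1$f * cnj(U$1$d) + U$2$f * cnj(U$2$d) = dl f d"
        using U2_cols[OF elim, of f d] by (simp add: sum_2 dl_def)
      show ?case unfolding c1[symmetric] c2[symmetric] by (simp add: ent_def sum_2 algebra_simps)
    qed
  qed
  also have "\<dots> = dl e c * dl f d" using prob_space by simp
  finally show ?thesis .
qed

lemma contr2: "(\<Sum>a\<in>UNIV. \<Sum>b\<in>UNIV. mom M a e b f b c a d) = dl e d * dl f c"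
proof -
  have "(\<Sum>a\<in>UNIV. \<Sum>b\<in>UNIV. mom M a e b f b c a d) = integral\<^sup>L M (\<lambda>U. \<Sum>a\<in>UNIV. \<Sum>b\<in>UNIV. ent U a e b f b c a d)"
    unfolding mom_def by (simp add: integral_sum int_ent)
  also have "\<dots> = integral\<^sup>L M (\<lambda>U. dl e d * dl f c)"
  proof (rule integral_cong_AE)
    show "(\<lambda>U. \<Sum>a\<in>UNIV. \<Sum>b\<in>UNIV. ent U a e b f b c a d) \<in> borel_measurable M"
      by (rule meas_cont) (intro continuous_on_sum cont_ent)
    show "(\<lambda>U. dl e d * dl f c) \<in> borel_measurable M" by simp
    show "AE U in M. (\<Sum>a\<in>UNIV. \<Sum>b\<in>UNIV. ent U a e b f b c a d) = dl e d * dl f c"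
      using AE_U2
    proof eventually_elim
      case (elim U)
      have c1: "U$1$e * cnj(U$1$d) + U$2$e * cnj(U$2$d) = dl e d"
        using U2_cols[OF elim, of e d] by (simp add: sum_2 dl_def)
      have c2: "U$1$f * cnj(U$1$c) + U$2$f * cnj(U$2$c) = dl f c"
        using U2_cols[OF elim, of f c] by (simp add: sum_2 dl_def)
      show ?case unfolding c1[symmetric] c2[symmetric] by (simp add: ent_def sum_2 algebra_simps)
    qed
  qed
  also have "\<dots> = dl e d * dl f c" using prob_space by simp
  finally show ?thesis .
qed

lemma mom_facts:
  fixes e f c d :: 2
  defines "m \<equiv> (\<lambda>a b g h. mom M a e b f g c h d)"
  shows "m 1 1 1 2 = 0" "m 1 1 2 1 = 0" "m 1 1 2 2 = 0" "m 1 2 1 1 = 0" "m 2 1 1 1 = 0"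
    "m 1 2 2 2 = 0" "m 2 1 2 2 = 0" "m 2 2 1 1 = 0" "m 2 2 1 2 = 0" "m 2 2 2 1 = 0"
proof -
  have P: "m a b g h = (\<Sum>a'\<in>UNIV. \<Sum>b'\<in>UNIV. \<Sum>g'\<in>UNIV. \<Sum>h'\<in>UNIV.
   Pm$a$a' * Pm$b$b' * cnj (Pm$g$g') * cnj (Pm$h$h') * m a' b' g' h')" for a b g h
    unfolding m_def by (rule mom_inv[OF Pm_U2])
  show "m 1 1 1 2 = 0" using P[of 1 1 1 2] by (simp add: Pm_def sum_2 neg_i_fix)
  show "m 1 1 2 1 = 0" using P[of 1 1 2 1] by (simp add: Pm_def sum_2 neg_i_fix)
  show "m 1 1 2 2 = 0" using P[of 1 1 2 2] by (simp add: Pm_def sum_2 neg_i_fix)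
  show "m 1 2 1 1 = 0" using P[of 1 2 1 1] by (simp add: Pm_def sum_2 neg_i_fix)
  show "m 2 1 1 1 = 0" using P[of 2 1 1 1] by (simp add: Pm_def sum_2 neg_i_fix)
  show "m 1 2 2 2 = 0" using P[of 1 2 2 2] by (simp add: Pm_def sum_2 neg_i_fix)
  show "m 2 1 2 2 = 0" using P[of 2 1 2 2] by (simp add: Pm_def sum_2 neg_i_fix)
  show "m 2 2 1 1 = 0" using P[of 2 2 1 1] by (simp add: Pm_def sum_2 neg_i_fix)
  show "m 2 2 1 2 = 0" using P[of 2 2 1 2] by (simp add: Pm_def sum_2 neg_i_fix)
  show "m 2 2 2 1 = 0" using P[of 2 2 2 1] by (simp add: Pm_def sum_2 neg_i_fix)
qed


lemma mom_val:
  fixes e f c d :: 2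
  shows "mom M a e b f g c h d = Tf a e b f g c h d"
proof -
  define m where "m a b g h = mom M a e b f g c h d" for a b g h
  note Z = mom_facts[of e f c d, folded m_def]
  have X: "m a b g h = (\<Sum>a'\<in>UNIV. \<Sum>b'\<in>UNIV. \<Sum>g'\<in>UNIV. \<Sum>h'\<in>UNIV.
   pauliX$a$a' * pauliX$b$b' * cnj (pauliX$g$g') * cnj (pauliX$h$h') * m a' b' g' h')" for a b g h
    unfolding m_def by (rule mom_inv[OF X_U2])
  have H: "m a b g h = (\<Sum>a'\<in>UNIV. \<Sum>b'\<in>UNIV. \<Sum>g'\<in>UNIV. \<Sum>h'\<in>UNIV.
   Hm$a$a' * Hm$b$b' * cnj (Hm$g$g') * cnj (Hm$h$h') * m a' b' g' h')" for a b g h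
    unfolding m_def by (rule mom_inv[OF Hm_U2])
  have X1: "m 2 2 2 2 = m 1 1 1 1" using X[of 2 2 2 2] by (simp add: pauliX_def sum_2)
  have X2: "m 2 1 2 1 = m 1 2 1 2" using X[of 2 1 2 1] by (simp add: pauliX_def sum_2)
  have X3: "m 2 1 1 2 = m 1 2 2 1" using X[of 2 1 1 2] by (simp add: pauliX_def sum_2)
  have H0: "m 1 1 1 1 = m 1 1 1 1 / 2 + (m 1 2 1 2 / 2 + m 1 2 2 1 / 2)" 
    using H[of 1 1 1 1] Z X1 X2 X3 by (simp add: Hm_def sum_2 algebra_simps hs_sq' hs_sq m_def)
  have H1: "m 1 1 1 1 = m 1 2 1 2 + m 1 2 2 1" using lin1[OF H0] .
  have C1: "2 * m 1 1 1 1 + 2 * m 1 2 1 2 = dl e c * dl f d"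
    using contr1[of e f c d] X1 X2 by (simp add: sum_2 m_def add_ac)
  have C2: "2 * m 1 1 1 1 + 2 * m 1 2 2 1 = dl e d * dl f c"
    using contr2[of e f c d] X1 X3 by (simp add: sum_2 m_def add_ac)
  have p: "m 1 1 1 1 = (dl e c * dl f d + dl e d * dl f c) / 6" by (rule lin2[OF H1 C1 C2])
  have q: "m 1 2 1 2 = dl e c * dl f d / 3 - dl e d * dl f c / 6" by (rule lin3[OF H1 C1 C2])
  have r: "m 1 2 2 1 = dl e d * dl f c / 3 - dl e c * dl f d / 6" by (rule lin4[OF H1 C1 C2])
  have "\<forall>a b g h. m a b g h = Tf a e b f g c h d"
    unfolding forall_2 Tf_def
    by (simp only: Z X1 X2 X3 p q r dlc) (simp add: field_simps)
  then show ?thesis unfolding m_def by simp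
qed

end

lemma S_all: "\<forall>a e b f g c h d. Sent a e b f g c h d = Tf a e b f g c h d"
  unfolding Sent_def sum11 forall_2 Tf_def
  apply (simp add: design_cols_def design_weights_def qe dl_def complex_eq_iff)
  apply (simp add: algebra_simps ca2 cb2 ca2' cb2')
  done

lemma quat_U2: assumes "r0*r0 + r1*r1 + r2*r2 + r3*r3 = 1"
  shows "quat_elem (r0,r1,r2,r3) \<in> U2"
  unfolding U2_def qe using assms
  by (simp add: vec_eq_iff forall_2 matrix_matrix_mult_def adjoint_def mat_def sum_2 complex_eq_iff algebra_simps)

lemma quat_same: assumes "same_in_PU (quat_elem (r0,r1,r2,r3)) (quat_elem (s0,s1,s2,s3))"
  shows "\<exists>c. complex_of_real r0 = c * of_real s0 \<and> complex_of_real r1 = c * of_real s1 \<and>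
     complex_of_real r2 = c * of_real s2 \<and> complex_of_real r3 = c * of_real s3"
proof -
  obtain c where c: "quat_elem (r0,r1,r2,r3) = (\<chi> i j. c * quat_elem (s0,s1,s2,s3) $ i $ j)"
    using assms unfolding same_in_PU_def by blast
  have e11: "Complex r0 r3 = c * Complex s0 s3" using arg_cong[OF c, of "\<lambda>A. A$1$1"] by (simp add: qe)
  have e12: "Complex r2 r1 = c * Complex s2 s1" using arg_cong[OF c, of "\<lambda>A. A$1$2"] by (simp add: qe)
  have e21: "Complex (-r2) r1 = c * Complex (-s2) s1" using arg_cong[OF c, of "\<lambda>A. A$2$1"] by (simp add: qe)
  have e22: "Complex r0 (-r3) = c * Complex s0 (-s3)" using arg_cong[OF c, of "\<lambda>A. A$2$2"] by (simp add: qe)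
  note E = e11 e12 e21 e22
  have cx: "Complex x y = of_real x + \<i> * of_real y" for x y by (simp add: complex_eq_iff)
  note E' = E[unfolded cx of_real_minus]
  have x0: "complex_of_real r0 = c * of_real s0" using E'(1) E'(4) by algebra
  have "\<i> * (complex_of_real r3 - c * of_real s3) = 0" using E'(1) E'(4) by algebra
  then have x3: "complex_of_real r3 = c * of_real s3" by simp
  have "\<i> * (complex_of_real r1 - c * of_real s1) = 0" using E'(2) E'(3) by algebra
  then have x1: "complex_of_real r1 = c * of_real s1" by simp
  have x2: "complex_of_real r2 = c * of_real s2" using E'(2) E'(3) by algebra
  show ?thesis using x0 x1 x2 x3 by blast
qed



lemma quat_U2': "(case r of (r0,r1,r2,r3) \<Rightarrow> r0*r0 + r1*r1 + r2*r2 + r3*r3 = 1) \<Longrightarrow> quat_elem r \<in> U2"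
  by (cases r) (simp add: quat_U2)

definition sp :: "real \<times> real \<times> real \<times> real \<Rightarrow> real \<times> real \<times> real \<times> real \<Rightarrow> bool" where
  "sp r s = (case r of (r0,r1,r2,r3) \<Rightarrow> case s of (s0,s1,s2,s3) \<Rightarrow>
     \<exists>c. complex_of_real r0 = c * of_real s0 \<and> complex_of_real r1 = c * of_real s1 \<and>
     complex_of_real r2 = c * of_real s2 \<and> complex_of_real r3 = c * of_real s3)"

lemma quat_same': "same_in_PU (quat_elem r) (quat_elem s) \<Longrightarrow> sp r s"
  unfolding sp_def by (cases r; cases s) (simp add: quat_same)

lemma L11: "{..<11::nat} = {0,1,2,3,4,5,6,7,8,9,10}" by (auto simp: numeral_eq_Suc less_Suc_eq)

lemma ca_pos: "ca > 0" by (simp add: ca_def)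
lemma cb_pos: "cb > 0" by (simp add: cb_def)
lemma cab: "ca \<noteq> 1" "cb \<noteq> 1" "ca \<noteq> cb"
proof -
  show "ca \<noteq> 1" using ca2 by auto
  show "cb \<noteq> 1" using cb2 by auto
  show "ca \<noteq> cb" using ca2 cb2 by auto
qed

lemma cols_unit: "\<forall>x\<in>{..<11::nat}. (case design_cols ! x of (r0,r1,r2,r3) \<Rightarrow> r0*r0 + r1*r1 + r2*r2 + r3*r3 = 1)"
  unfolding L11 by (simp add: design_cols_def ca2 cb2)

lemma cols_distinct: "\<forall>x\<in>{..<11::nat}. \<forall>y\<in>{..<11::nat}. x \<noteq> y \<longrightarrow> \<not> sp (design_cols ! x) (design_cols ! y)"
  unfolding L11 sp_def using ca_pos cb_pos cab by (simp add: design_cols_def)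


lemma twirl_ent: "twirl2 U $ ((a,b),(g,h)) $ ((e,f),(c,d)) = ent U a e b f c g d h"
  by (simp add: twirl2_def kron_def adjoint_def ent_def)

lemma haar_part:
  assumes hM: "haar_U2 M"
  shows "(\<Sum>x\<in>{..<11::nat}. design_weights ! x *\<^sub>R twirl2 (quat_elem (design_cols ! x))) = integral\<^sup>L M twirl2"
proof -
  have bl: "bounded_linear (\<lambda>x::complex^((2\<times>2)\<times>(2\<times>2))^((2\<times>2)\<times>(2\<times>2)). x $ r $ c)" for r c
    by (rule bounded_linear_compose[OF bounded_linear_vec_nth bounded_linear_vec_nth])
  have "(\<Sum>x\<in>{..<11::nat}. design_weights ! x *\<^sub>R twirl2 (quat_elem (design_cols ! x))) $ r $ c = integral\<^sup>L M twirl2 $ r $ c" for r c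
  proof -
    obtain a b g h where r: "r = ((a,b),(g,h))" by (metis prod.collapse)
    obtain e f c' d where c: "c = ((e,f),(c',d))" by (metis prod.collapse)
    have "integral\<^sup>L M twirl2 $ r $ c = integral\<^sup>L M (\<lambda>U. twirl2 U $ r $ c)"
      by (rule integral_bounded_linear[OF bl int_twirl2[OF hM], symmetric])
    also have "\<dots> = mom M a e b f c' g d h" unfolding mom_def r c twirl_ent ..
    also have "\<dots> = Tf a e b f c' g d h" by (rule mom_val[OF hM])
    also have "\<dots> = Sent a e b f c' g d h" using S_all by simp
    also have "\<dots> = (\<Sum>x\<in>{..<11::nat}. design_weights ! x *\<^sub>R twirl2 (quat_elem (design_cols ! x))) $ r $ c"
      unfolding Sent_def r c
      by (simp only: sum_component vector_scaleR_component twirl_ent) (simp add: ent_def scaleR_conv_of_real mult.assoc)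
    finally show ?thesis by simp
  qed
  then show ?thesis by (simp add: vec_eq_iff)
qed

lemma Wx: assumes "x < 11" shows "design_weights ! x = (if x = 0 then 1/16 else 3/32)"
proof (cases "x = 0")
  case True then show ?thesis by (simp add: design_weights_def)
next
  case False
  then have "design_weights ! x = replicate 10 (3/32) ! (x - 1)" unfolding design_weights_def by (simp only: nth_append) simp
  also have "\<dots> = 3/32" using assms False by (intro nth_replicate) simp
  finally show ?thesis using False by simp
qed

theorem mainTheorem11:
  shows "weighted_2design {..<11::nat} (\<lambda>k. quat_elem (design_cols ! k)) (\<lambda>k. design_weights ! k)"
  unfolding weighted_2design_def
proof (intro conjI allI impI ballI)
  show "finite {..<11::nat}" by simp
  fix x assume "x \<in> {..<11::nat}"
  then have "case design_cols ! x of (r0,r1,r2,r3) \<Rightarrow> r0*r0 + r1*r1 + r2*r2 + r3*r3 = 1"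
    using cols_unit by (rule bspec[rotated])
  then show "quat_elem (design_cols ! x) \<in> U2" by (rule quat_U2')
next
  fix x y assume "x \<in> {..<11::nat}" "y \<in> {..<11::nat}" "x \<noteq> y"
  then have ns: "\<not> sp (design_cols ! x) (design_cols ! y)" using cols_distinct by blast
  show "\<not> same_in_PU (quat_elem (design_cols ! x)) (quat_elem (design_cols ! y))"
  proof
    assume "same_in_PU (quat_elem (design_cols ! x)) (quat_elem (design_cols ! y))"
    then have "sp (design_cols ! x) (design_cols ! y)" by (rule quat_same')
    then show False using ns by contradiction
  qed
next
  fix x assume "x \<in> {..<11::nat}"
  then show "0 < design_weights ! x" by (simp add: Wx)
next
  have "sum ((!) design_weights) {..<11} = (\<Sum>x\<in>{..<11::nat}. if x = 0 then 1/16 else 3/32)"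
    by (rule sum.cong) (auto simp: Wx)
  also have "\<dots> = 1" unfolding L11 by simp
  finally show "sum ((!) design_weights) {..<11} = 1" .
next
  fix M :: "cmat2 measure" assume "haar_U2 M"
  then show "(\<Sum>x\<in>{..<11}. design_weights ! x *\<^sub>R twirl2 (quat_elem (design_cols ! x))) = integral\<^sup>L M twirl2"
    by (rule haar_part)
qed

end
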